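(* Let $\mathbb{B}$ be the open unit ball in $\mathbb{R}^n$ and $\mathbb{B}_*=\mathbb{B}\setminus\{0\}$. Let $\alpha$ be a multi-index with $|\alpha| = m$, where $1 \leq m < n$. Suppose $f \in L^{\frac{n}{n-m}}(\mathbb{B})$, $g \in L^1(\mathbb{B})$, and $D^\alpha f = g$ holds in the sense of distributions on $\mathbb{B}_*$, where $D^\alpha=\partial_{x_1}^{\alpha_1}\cdots\partial_{x_n}^{\alpha_n}$. Then $D^\alpha f = g$ holds in the sense of distributions on $\mathbb{B}$. *)

theory Defs
  imports "HOL-Analysis.Analysis"
begin

definition partial :: "'n::finite \<Rightarrow> (real^'n \<Rightarrow> real) \<Rightarrow> (real^'n \<Rightarrow> real)" where
  "partial i \<phi> = (\<lambda>x. deriv (\<lambda>t. \<phi> (x + t *\<^sub>R axis i 1)) 0)"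

fun partials :: "'n::finite list \<Rightarrow> (real^'n \<Rightarrow> real) \<Rightarrow> (real^'n \<Rightarrow> real)" where
  "partials [] \<phi> = \<phi>"
| "partials (i # is) \<phi> = partial i (partials is \<phi>)"

definition smooth :: "(real^'n::finite \<Rightarrow> real) \<Rightarrow> bool" where
  "smooth \<phi> \<longleftrightarrow> (\<forall>is. continuous_on UNIV (partials is \<phi>) \<and>
      (\<forall>i x. (\<lambda>t. partials is \<phi> (x + t *\<^sub>R axis i 1)) differentiable (at 0)))"

definition test_function :: "(real^'n::finite) set \<Rightarrow> (real^'n \<Rightarrow> real) \<Rightarrow> bool" where
  "test_function U \<phi> \<longleftrightarrow> smooth \<phi> \<and> compact (closure {x. \<phi> x \<noteq> 0})
      \<and> closure {x. \<phi> x \<noteq> 0} \<subseteq> U"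

definition mi_order :: "('n::finite \<Rightarrow> nat) \<Rightarrow> nat" where
  "mi_order \<alpha> = (\<Sum>i\<in>UNIV. \<alpha> i)"

text \<open>D^alpha: differentiate alpha i times in direction i (for smooth functions the order
  of differentiation is irrelevant; we pick some list with the right multiplicities).\<close>
definition Dalpha :: "('n::finite \<Rightarrow> nat) \<Rightarrow> (real^'n \<Rightarrow> real) \<Rightarrow> (real^'n \<Rightarrow> real)" where
  "Dalpha \<alpha> \<phi> = partials (SOME is. \<forall>i. count_list is i = \<alpha> i) \<phi>"

definition distrib_deriv_eq :: "('n::finite \<Rightarrow> nat) \<Rightarrow> (real^'n \<Rightarrow> real) \<Rightarrow> (real^'n \<Rightarrow> real)
    \<Rightarrow> (real^'n) set \<Rightarrow> bool" where
  "distrib_deriv_eq \<alpha> f g U \<longleftrightarrow> (\<forall>\<phi>. test_function U \<phi> \<longrightarrow>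
      (LINT x|lebesgue_on U. f x * Dalpha \<alpha> \<phi> x)
        = (-1) ^ mi_order \<alpha> * (LINT x|lebesgue_on U. g x * \<phi> x))"

definition in_Lp :: "real \<Rightarrow> (real^'n::finite) set \<Rightarrow> (real^'n \<Rightarrow> real) \<Rightarrow> bool" where
  "in_Lp p U f \<longleftrightarrow> f \<in> borel_measurable (lebesgue_on U)
      \<and> integrable (lebesgue_on U) (\<lambda>x. \<bar>f x\<bar> powr p)"

end

theory Submission imports Defs "HOL-Computational_Algebra.Polynomial" begin


definition dseq_on :: "real set \<Rightarrow> (nat \<Rightarrow> real \<Rightarrow> real) \<Rightarrow> bool" where
  "dseq_on I d \<longleftrightarrow> (\<forall>k. \<forall>t\<in>I. (d k has_real_derivative d (Suc k) t) (at t))"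

lemma poly_exp_lim:
  "((\<lambda>h::real. poly Q (1/h) * exp (-(1/h))) \<longlongrightarrow> 0) (at_right 0)"
proof -
  have "((\<lambda>u::real. poly Q u * exp (-u)) \<longlongrightarrow> 0) at_top"
  proof -
    have "((\<lambda>u::real. \<Sum>i\<le>degree Q. coeff Q i * (u ^ i / exp u)) \<longlongrightarrow> (\<Sum>i\<le>degree Q. coeff Q i * 0)) at_top"
      by (intro tendsto_intros tendsto_power_div_exp_0)
    moreover have "(\<lambda>u::real. \<Sum>i\<le>degree Q. coeff Q i * (u ^ i / exp u)) = (\<lambda>u. poly Q u * exp (-u))"
      by (auto simp: poly_altdef sum_distrib_right exp_minus divide_inverse mult.assoc)
    ultimately show ?thesis by simp
  qed
  moreover have "filterlim (\<lambda>h::real. 1/h) at_top (at_right 0)"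
    using filterlim_inverse_at_top_right by (simp add: inverse_eq_divide)
  ultimately show ?thesis by (rule filterlim_compose)
qed

primrec EP :: "nat \<Rightarrow> real poly" where
  "EP 0 = 1"
| "EP (Suc k) = [:0,0,1:] * (EP k - pderiv (EP k))"

definition dE :: "nat \<Rightarrow> real \<Rightarrow> real" where
  "dE k t = (if t > 0 then poly (EP k) (1/t) * exp (-(1/t)) else 0)"

lemma dE_pos_deriv:
  assumes "t > 0"
  shows "((\<lambda>t. poly (EP k) (1/t) * exp (-(1/t))) has_real_derivative dE (Suc k) t) (at t)"
proof -
  have d1: "((\<lambda>t. 1/t) has_real_derivative -(1/t^2)) (at t)"
    using assms by (auto intro!: derivative_eq_intros simp: power2_eq_square)
  have A: "((\<lambda>t. poly (EP k) (1/t)) has_real_derivative poly (pderiv (EP k)) (1/t) * (-(1/t^2))) (at t)"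
    by (rule DERIV_chain2[OF poly_DERIV d1])
  have "((\<lambda>t. -(1/t)) has_real_derivative -(-(1/t^2))) (at t)" by (rule DERIV_minus[OF d1])
  then have B: "((\<lambda>t. exp (-(1/t))) has_real_derivative exp (-(1/t)) * (-(-(1/t^2)))) (at t)"
    by (rule DERIV_chain2[OF DERIV_exp])
  have D: "((\<lambda>t. poly (EP k) (1/t) * exp (-(1/t))) has_real_derivative
     (poly (pderiv (EP k)) (1/t) * (-(1/t^2))) * exp (-(1/t)) + (exp (-(1/t)) * (-(-(1/t^2)))) * poly (EP k) (1/t)) (at t)"
    by (rule DERIV_mult[OF A B])
  moreover have "(poly (pderiv (EP k)) (1/t) * (-(1/t^2))) * exp (-(1/t)) + (exp (-(1/t)) * (-(-(1/t^2)))) * poly (EP k) (1/t)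
      = dE (Suc k) t"
    using assms by (simp add: dE_def algebra_simps power2_eq_square)
  ultimately show ?thesis by simp
qed

lemma dE_deriv: "(dE k has_real_derivative dE (Suc k) t) (at t)"
proof (cases "t = 0")
  case False
  show ?thesis
  proof (cases "t > 0")
    case True
    have ev: "eventually (\<lambda>x. x \<in> {0<..}) (nhds t)"
      using True by (intro eventually_nhds_in_open) auto
    have "(dE k has_real_derivative dE (Suc k) t) (at t) \<longleftrightarrow>
          ((\<lambda>t. poly (EP k) (1/t) * exp (-(1/t))) has_real_derivative dE (Suc k) t) (at t)"
      by (rule DERIV_cong_ev) (use ev in \<open>auto simp: dE_def elim!: eventually_mono\<close>)
    then show ?thesis using dE_pos_deriv[OF True] by simp
  next
    case neg: False
    with False have tn: "t < 0" by simp
    have ev: "eventually (\<lambda>x. x \<in> {..<0}) (nhds t)"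
      using tn by (intro eventually_nhds_in_open) auto
    have ev2: "eventually (\<lambda>x. dE k x = 0) (nhds t)"
      using ev by eventually_elim (auto simp: dE_def)
    have "(dE k has_real_derivative dE (Suc k) t) (at t) \<longleftrightarrow>
          ((\<lambda>t. 0) has_real_derivative 0) (at t)"
      by (rule DERIV_cong_ev) (use tn ev2 in \<open>auto simp: dE_def\<close>)
    then show ?thesis by simp
  qed
next
  case True
  have "((\<lambda>y. (dE k y - dE k 0) / (y - 0)) \<longlongrightarrow> 0) (at 0)"
    unfolding filterlim_at_split
  proof
    show "((\<lambda>y. (dE k y - dE k 0) / (y - 0)) \<longlongrightarrow> 0) (at_left 0)"
    proof (rule tendsto_eventually)
      show "eventually (\<lambda>y. (dE k y - dE k 0) / (y - 0) = (0::real)) (at_left 0)"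
        by (auto simp: eventually_at_filter dE_def)
    qed
    have "((\<lambda>h::real. poly ([:0,1:] * EP k) (1/h) * exp (-(1/h))) \<longlongrightarrow> 0) (at_right 0)"
      by (rule poly_exp_lim)
    moreover have "eventually (\<lambda>y. poly ([:0,1:] * EP k) (1/y) * exp (-(1/y)) = (dE k y - dE k 0) / (y - 0)) (at_right 0)"
      by (auto simp: eventually_at_filter dE_def)
    ultimately show "((\<lambda>y. (dE k y - dE k 0) / (y - 0)) \<longlongrightarrow> 0) (at_right 0)"
      by (rule Lim_transform_eventually)
  qed
  then have "(dE k has_real_derivative 0) (at 0)"
    by (simp add: has_field_derivative_iff)
  then show ?thesis using True by (simp add: dE_def)
qed

lemma dseq_dE: "dseq_on UNIV dE"
  by (simp add: dseq_on_def dE_deriv)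

definition dR :: "nat \<Rightarrow> real \<Rightarrow> real" where
  "dR k t = (-1)^k * fact k * inverse t ^ (Suc k)"

lemma dR_fun: "dR k = (\<lambda>t. (-1)^k * fact k * inverse t ^ (Suc k))"
  by (rule ext) (simp add: dR_def)

lemma dseq_dR: "dseq_on {0<..} dR"
  unfolding dseq_on_def
proof (intro allI ballI)
  fix k and t :: real assume "t \<in> {0<..}"
  then have t: "t > 0" by simp
  have "((\<lambda>t. inverse t ^ (Suc k)) has_real_derivative
      of_nat (Suc k) * inverse t ^ (Suc k - 1) * (- (inverse t ^ 2))) (at t)"
    using DERIV_power[OF DERIV_inverse[of t], of "Suc k"] t by (simp add: power2_eq_square mult_ac)
  then have D: "((\<lambda>t. (-1)^k * fact k * inverse t ^ (Suc k)) has_real_derivative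
      (-1)^k * fact k * (of_nat (Suc k) * inverse t ^ (Suc k - 1) * (- (inverse t ^ 2)))) (at t)"
    by (rule DERIV_cmult)
  have eq: "(-1)^k * fact k * (of_nat (Suc k) * inverse t ^ (Suc k - 1) * (- (inverse t ^ 2))) = dR (Suc k) t"
    by (simp add: dR_def power2_eq_square)
  have X: "((\<lambda>t. (-1)^k * fact k * inverse t ^ (Suc k)) has_real_derivative dR (Suc k) t) (at t)"
    using D unfolding eq .
  show "(dR k has_real_derivative dR (Suc k) t) (at t)"
    unfolding dR_fun[of k] by (rule X)
qed

lemma dR0: "dR 0 t = inverse t" by (simp add: dR_def)
lemma dE0: "dE 0 t = (if t > 0 then exp (-(1/t)) else 0)" by (simp add: dE_def)




definition adiff :: "(real^'n::finite \<Rightarrow> real) \<Rightarrow> bool" where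
  "adiff u \<longleftrightarrow> (\<forall>i x. (\<lambda>t. u (x + t *\<^sub>R axis i 1)) differentiable (at 0))"

lemma smooth_alt: "smooth u \<longleftrightarrow> (\<forall>is. continuous_on UNIV (partials is u) \<and> adiff (partials is u))"
  by (simp add: smooth_def adiff_def)

lemma partial_has:
  assumes "adiff u"
  shows "((\<lambda>t. u (x + t *\<^sub>R axis i 1)) has_real_derivative partial i u x) (at 0)"
  using assms unfolding adiff_def partial_def
  by (simp add: DERIV_deriv_iff_real_differentiable)

lemma adiffI:
  assumes "\<And>i x. ((\<lambda>t. u (x + t *\<^sub>R axis i 1)) has_real_derivative D i x) (at 0)"
  shows "adiff u"
  unfolding adiff_def using assms real_differentiable_def by blast

lemma partial_eqI:
  assumes "((\<lambda>t. u (x + t *\<^sub>R axis i 1)) has_real_derivative D) (at 0)"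
  shows "partial i u x = D"
  using assms unfolding partial_def by (rule DERIV_imp_deriv)

lemma partials_append: "partials (is @ js) u = partials is (partials js u)"
  by (induction "is") auto

lemma partial_lin_has:
  assumes "adiff u" "adiff v"
  shows "((\<lambda>t. a * u (x + t *\<^sub>R axis i 1) + b * v (x + t *\<^sub>R axis i 1)) has_real_derivative
          a * partial i u x + b * partial i v x) (at 0)"
  by (intro DERIV_add DERIV_cmult partial_has assms)

lemma adiff_lin: "adiff u \<Longrightarrow> adiff v \<Longrightarrow> adiff (\<lambda>x. a * u x + b * v x)"
  by (rule adiffI, rule partial_lin_has)

lemma partial_lin: "adiff u \<Longrightarrow> adiff v \<Longrightarrow>
   partial i (\<lambda>x. a * u x + b * v x) = (\<lambda>x. a * partial i u x + b * partial i v x)"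
  by (rule ext, rule partial_eqI, rule partial_lin_has)

lemma partial_mult_has:
  assumes "adiff u" "adiff v"
  shows "((\<lambda>t. u (x + t *\<^sub>R axis i 1) * v (x + t *\<^sub>R axis i 1)) has_real_derivative
          partial i u x * v x + u x * partial i v x) (at 0)"
  using DERIV_mult[OF partial_has[OF assms(1)] partial_has[OF assms(2)], of x i x i]
  by (simp add: algebra_simps)

lemma adiff_mult: "adiff u \<Longrightarrow> adiff v \<Longrightarrow> adiff (\<lambda>x. u x * v x)"
  by (rule adiffI, rule partial_mult_has)

lemma partial_mult: "adiff u \<Longrightarrow> adiff v \<Longrightarrow>
   partial i (\<lambda>x. u x * v x) = (\<lambda>x. partial i u x * v x + u x * partial i v x)"
  by (rule ext, rule partial_eqI, rule partial_mult_has)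

lemma partials_lin:
  assumes "\<forall>js. length js < length is \<longrightarrow> adiff (partials js u) \<and> adiff (partials js v)"
  shows "partials is (\<lambda>x. a * u x + b * v x) = (\<lambda>x. a * partials is u x + b * partials is v x)"
  using assms
proof (induction "is")
  case Nil then show ?case by simp
next
  case (Cons i "is")
  have IH: "partials is (\<lambda>x. a * u x + b * v x) = (\<lambda>x. a * partials is u x + b * partials is v x)"
    using Cons by auto
  have "adiff (partials is u)" "adiff (partials is v)" using Cons.prems by auto
  then show ?case by (simp add: IH partial_lin)
qed

lemma partials_add:
  assumes "\<forall>js. length js < length is \<longrightarrow> adiff (partials js u) \<and> adiff (partials js v)"
  shows "partials is (\<lambda>x. u x + v x) = (\<lambda>x. partials is u x + partials is v x)"
  using partials_lin[OF assms, of 1 1] by simp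

lemma smooth_lin:
  assumes "smooth u" "smooth v"
  shows "smooth (\<lambda>x. a * u x + b * v x)"
  unfolding smooth_alt
proof
  fix "is" :: "'a list"
  have eq: "partials is (\<lambda>x. a * u x + b * v x) = (\<lambda>x. a * partials is u x + b * partials is v x)"
    using assms by (intro partials_lin) (auto simp: smooth_alt)
  show "continuous_on UNIV (partials is (\<lambda>x. a * u x + b * v x)) \<and> adiff (partials is (\<lambda>x. a * u x + b * v x))"
    unfolding eq using assms
    by (auto simp: smooth_alt intro!: continuous_intros adiff_lin)
qed

lemma smooth_add: "smooth u \<Longrightarrow> smooth v \<Longrightarrow> smooth (\<lambda>x. u x + v x)"
  using smooth_lin[of u v 1 1] by simp

lemma smooth_partial: "smooth u \<Longrightarrow> smooth (partial i u)"
  unfolding smooth_alt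
proof
  fix js assume "\<forall>is. continuous_on UNIV (partials is u) \<and> adiff (partials is u)"
  then show "continuous_on UNIV (partials js (partial i u)) \<and> adiff (partials js (partial i u))"
    using partials_append[of js "[i]" u] by (metis partials.simps)
qed

lemma smooth_partials: "smooth u \<Longrightarrow> smooth (partials is u)"
  by (induction "is") (auto intro: smooth_partial)

lemma smooth_mult:
  assumes "smooth u" "smooth v"
  shows "smooth (\<lambda>x. u x * v x)"
proof -
  have "\<forall>u v :: real^'a \<Rightarrow> real. smooth u \<longrightarrow> smooth v \<longrightarrow> (\<forall>is. length is \<le> n \<longrightarrow>
          continuous_on UNIV (partials is (\<lambda>x. u x * v x)) \<and> adiff (partials is (\<lambda>x. u x * v x)))" for n
  proof (induction n)
    case 0
    show ?case by (auto simp: smooth_alt intro!: continuous_intros adiff_mult dest: spec[of _ "[]"])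
  next
    case (Suc n)
    show ?case
    proof (intro allI impI)
      fix u v :: "real^'a \<Rightarrow> real" and "is" :: "'a list"
      assume u: "smooth u" and v: "smooth v" and len: "length is \<le> Suc n"
      show "continuous_on UNIV (partials is (\<lambda>x. u x * v x)) \<and> adiff (partials is (\<lambda>x. u x * v x))"
      proof (cases "length is \<le> n")
        case True show ?thesis using Suc.IH[rule_format, OF u v True] by blast
      next
        case False
        then have ln: "length is = Suc n" using len by simp
        then obtain js i where isd: "is = js @ [i]" by (metis length_Suc_conv_rev)
        then have ljs: "length js = n" using ln by simp
        have ad: "adiff u" "adiff v" using u v by (auto simp: smooth_alt dest: spec[of _ "[]"])
        have su: "smooth (partial i u)" "smooth (partial i v)" using u v by (auto intro: smooth_partial)
        have A: "\<forall>ks. length ks \<le> n \<longrightarrow> continuous_on UNIV (partials ks (\<lambda>x. partial i u x * v x)) \<and> adiff (partials ks (\<lambda>x. partial i u x * v x))"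
          using Suc.IH[rule_format, OF su(1) v] by blast
        have B: "\<forall>ks. length ks \<le> n \<longrightarrow> continuous_on UNIV (partials ks (\<lambda>x. u x * partial i v x)) \<and> adiff (partials ks (\<lambda>x. u x * partial i v x))"
          using Suc.IH[rule_format, OF u su(2)] by blast
        have eq: "partials is (\<lambda>x. u x * v x) = (\<lambda>x. partials js (\<lambda>x. partial i u x * v x) x + partials js (\<lambda>x. u x * partial i v x) x)"
          unfolding isd partials_append using ad
          by (simp add: partial_mult) (rule partials_add, use A B ljs in auto)
        show ?thesis unfolding eq using A B ljs by (auto intro!: continuous_intros adiff_lin[of _ _ 1 1, simplified])
      qed
    qed
  qed
  then show ?thesis using assms unfolding smooth_alt by blast
qed

lemma comp_has:
  assumes d: "dseq_on I d" and qI: "\<And>x. q x \<in> I" and q: "adiff q"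
  shows "((\<lambda>t. d k (q (x + t *\<^sub>R axis i 1))) has_real_derivative d (Suc k) (q x) * partial i q x) (at 0)"
proof -
  have "(d k has_real_derivative d (Suc k) (q x)) (at ((\<lambda>t. q (x + t *\<^sub>R axis i 1)) 0))"
    using d qI[of x] by (simp add: dseq_on_def)
  from DERIV_chain2[OF this partial_has[OF q]] show ?thesis by simp
qed

lemma adiff_comp: "dseq_on I d \<Longrightarrow> (\<And>x. q x \<in> I) \<Longrightarrow> adiff q \<Longrightarrow> adiff (\<lambda>x. d k (q x))"
  by (rule adiffI, rule comp_has)

lemma partial_comp: "dseq_on I d \<Longrightarrow> (\<And>x. q x \<in> I) \<Longrightarrow> adiff q \<Longrightarrow>
    partial i (\<lambda>x. d k (q x)) = (\<lambda>x. d (Suc k) (q x) * partial i q x)"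
  by (rule ext, rule partial_eqI, rule comp_has)

lemma cont_comp:
  assumes d: "dseq_on I d" and qI: "\<And>x. q x \<in> I" and q: "continuous_on UNIV q"
  shows "continuous_on UNIV (\<lambda>x. d k (q x))"
proof -
  have "continuous_on I (d k)"
    using d by (auto simp: dseq_on_def intro!: continuous_at_imp_continuous_on DERIV_isCont)
  then show ?thesis using q qI by (intro continuous_on_compose2[of I "d k" UNIV q]) auto
qed

lemma dseq_shift: "dseq_on I d \<Longrightarrow> dseq_on I (\<lambda>k. d (Suc k))"
  by (simp add: dseq_on_def)

lemma smooth_comp_mult:
  assumes d: "dseq_on I d" and qI: "\<And>x. q x \<in> I" and q: "smooth q" and p: "smooth p"
  shows "smooth (\<lambda>x. d 0 (q x) * p x)"
proof -
  have aq: "adiff q" and cq: "continuous_on UNIV q" using q by (auto simp: smooth_alt dest: spec[of _ "[]"])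
  have "\<forall>(d::nat \<Rightarrow> real \<Rightarrow> real) (p :: real^'a \<Rightarrow> real). dseq_on I d \<longrightarrow> smooth p \<longrightarrow> (\<forall>is. length is \<le> n \<longrightarrow>
          continuous_on UNIV (partials is (\<lambda>x. d 0 (q x) * p x)) \<and> adiff (partials is (\<lambda>x. d 0 (q x) * p x)))" for n
  proof (induction n)
    case 0
    show ?case
      by (auto simp: smooth_alt intro!: continuous_intros adiff_mult cont_comp[OF _ qI cq] adiff_comp[OF _ qI aq]
               dest: spec[of _ "[]"])
  next
    case (Suc n)
    show ?case
    proof (intro allI impI)
      fix d :: "nat \<Rightarrow> real \<Rightarrow> real" and p :: "real^'a \<Rightarrow> real" and "is" :: "'a list"
      assume d: "dseq_on I d" and p: "smooth p" and len: "length is \<le> Suc n"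
      show "continuous_on UNIV (partials is (\<lambda>x. d 0 (q x) * p x)) \<and> adiff (partials is (\<lambda>x. d 0 (q x) * p x))"
      proof (cases "length is \<le> n")
        case True show ?thesis using Suc.IH[rule_format, OF d p True] by blast
      next
        case False
        then have ln: "length is = Suc n" using len by simp
        then obtain js i where isd: "is = js @ [i]" by (metis length_Suc_conv_rev)
        then have ljs: "length js = n" using ln by simp
        have ad: "adiff p" using p by (auto simp: smooth_alt dest: spec[of _ "[]"])
        have sp: "smooth (\<lambda>x. partial i q x * p x)" "smooth (partial i p)"
          using q p by (auto intro: smooth_partial smooth_mult)
        have A: "\<forall>ks. length ks \<le> n \<longrightarrow> continuous_on UNIV (partials ks (\<lambda>x. d (Suc 0) (q x) * (partial i q x * p x)))
              \<and> adiff (partials ks (\<lambda>x. d (Suc 0) (q x) * (partial i q x * p x)))"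
          using Suc.IH[rule_format, OF dseq_shift[OF d] sp(1)] by blast
        have B: "\<forall>ks. length ks \<le> n \<longrightarrow> continuous_on UNIV (partials ks (\<lambda>x. d 0 (q x) * partial i p x)) \<and> adiff (partials ks (\<lambda>x. d 0 (q x) * partial i p x))"
          using Suc.IH[rule_format, OF d sp(2)] by blast
        have pe: "partial i (\<lambda>x. d 0 (q x) * p x) = (\<lambda>x. d (Suc 0) (q x) * (partial i q x * p x) + d 0 (q x) * partial i p x)"
          using partial_mult[OF adiff_comp[OF d qI aq] ad, of i] partial_comp[OF d qI aq, of i 0]
          by (simp add: algebra_simps)
        have eq: "partials is (\<lambda>x. d 0 (q x) * p x) = (\<lambda>x. partials js (\<lambda>x. d (Suc 0) (q x) * (partial i q x * p x)) x + partials js (\<lambda>x. d 0 (q x) * partial i p x) x)"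
          unfolding isd partials_append using pe
          by simp (rule partials_add, use A B ljs in auto)
        show ?thesis unfolding eq using A B ljs by (auto intro!: continuous_intros adiff_lin[of _ _ 1 1, simplified])
      qed
    qed
  qed
  then show ?thesis using assms unfolding smooth_alt by blast
qed

lemma partial_const: "partial i (\<lambda>x. c) = (\<lambda>x. 0)"
  by (rule ext, rule partial_eqI) simp

lemma partials_const: "partials is (\<lambda>x. c) = (\<lambda>x. if is = [] then c else 0)"
  by (induction "is") (auto simp: partial_const)

lemma adiff_const: "adiff (\<lambda>x. c)"
  by (rule adiffI[of _ "\<lambda>i x. 0"]) simp

lemma smooth_const: "smooth (\<lambda>x. c)"
  unfolding smooth_alt partials_const by (auto simp: adiff_const)

lemma smooth_comp:
  assumes d: "dseq_on I d" and qI: "\<And>x. q x \<in> I" and q: "smooth q"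
  shows "smooth (\<lambda>x. d 0 (q x))"
  using smooth_comp_mult[OF d qI q smooth_const[of 1]] by simp

lemma coord_has: "((\<lambda>t. (x + t *\<^sub>R axis i 1) $ j) has_real_derivative (if j = i then 1 else 0)) (at 0)"
  by (auto simp: axis_def intro!: derivative_eq_intros)

lemma smooth_coord: "smooth (\<lambda>x. x $ j)"
  unfolding smooth_alt
proof
  fix "is" :: "'a list"
  have pc: "partial i (\<lambda>x. x $ j) = (\<lambda>x. if j = i then 1 else 0)" for i
    by (rule ext, rule partial_eqI, rule coord_has)
  show "continuous_on UNIV (partials is (\<lambda>x. x $ j)) \<and> adiff (partials is (\<lambda>x. x $ j))"
  proof (cases "is" rule: rev_cases)
    case Nil
    then show ?thesis by (auto intro!: continuous_intros adiffI coord_has)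
  next
    case (snoc js i)
    have e: "partials [i] (\<lambda>x. x $ j) = (\<lambda>x. if j = i then 1 else 0)" using pc by simp
    show ?thesis unfolding snoc partials_append e using smooth_const[of "if j = i then 1 else 0", unfolded smooth_alt]
      by blast
  qed
qed

lemma smooth_sum: "finite S \<Longrightarrow> (\<And>j. j \<in> S \<Longrightarrow> smooth (f j)) \<Longrightarrow> smooth (\<lambda>x. \<Sum>j\<in>S. f j x)"
  by (induction S rule: finite_induct) (auto intro: smooth_add smooth_const)




lemma line_eventually:
  fixes x :: "real^'n::finite"
  assumes "open S" "x \<in> S"
  shows "eventually (\<lambda>t::real. x + t *\<^sub>R axis i 1 \<in> S) (nhds 0)"
proof -
  have "open ((\<lambda>t::real. x + t *\<^sub>R axis i 1) -` S)"
    by (rule open_vimage[OF assms(1)]) (auto intro!: continuous_intros)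
  moreover have "0 \<in> (\<lambda>t::real. x + t *\<^sub>R axis i 1) -` S" using assms(2) by simp
  ultimately have "eventually (\<lambda>t. t \<in> (\<lambda>t::real. x + t *\<^sub>R axis i 1) -` S) (nhds 0)"
    by (rule eventually_nhds_in_open)
  then show ?thesis by eventually_elim simp
qed

lemma partials_local:
  assumes "open S" "\<forall>x\<in>S. u x = v x"
  shows "\<forall>x\<in>S. partials is u x = partials is v x"
proof (induction "is")
  case Nil then show ?case using assms by simp
next
  case (Cons i "is")
  show ?case
  proof
    fix x assume x: "x \<in> S"
    have "eventually (\<lambda>t. partials is u (x + t *\<^sub>R axis i 1) = partials is v (x + t *\<^sub>R axis i 1)) (nhds 0)"
      using line_eventually[OF assms(1) x, of i] by eventually_elim (use Cons in auto)
    then show "partials (i # is) u x = partials (i # is) v x"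
      by (simp add: partial_def deriv_cong_ev)
  qed
qed

lemma partials_zero_outside:
  assumes "compact K" "\<forall>x. x \<notin> K \<longrightarrow> w x = 0" "x \<notin> K"
  shows "partials is w x = 0"
proof -
  have "open (- K)" using assms(1) compact_imp_closed by blast
  from partials_local[OF this, of w "\<lambda>x. 0" "is"] assms show ?thesis by (auto simp: partials_const)
qed

lemma partials_bounded:
  assumes "smooth w" "compact K" "\<forall>x. x \<notin> K \<longrightarrow> w x = 0"
  shows "\<exists>M. \<forall>x. \<bar>partials is w x\<bar> \<le> M"
proof -
  have "continuous_on K (partials is w)"
    using assms(1) by (auto simp: smooth_alt intro: continuous_on_subset)
  then have "compact (partials is w ` K)" using assms(2) by (rule compact_continuous_image)
  then obtain a where a: "\<forall>y\<in>partials is w ` K. \<bar>y\<bar> \<le> a"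
    using compact_imp_bounded bounded_real by metis
  have "\<bar>partials is w x\<bar> \<le> max a 0" for x
    using a partials_zero_outside[OF assms(2,3), of x "is"] by (cases "x \<in> K") auto
  then show ?thesis by blast
qed

lemma scale_has:
  assumes "adiff w"
  shows "((\<lambda>t. a * w (c *\<^sub>R (x + t *\<^sub>R axis i 1))) has_real_derivative a * (partial i w (c *\<^sub>R x) * c)) (at 0)"
proof -
  have h: "((\<lambda>s. w (c *\<^sub>R x + s *\<^sub>R axis i 1)) has_real_derivative partial i w (c *\<^sub>R x)) (at ((\<lambda>t. c*t) 0))"
    using partial_has[OF assms] by simp
  have "((\<lambda>t. c * t) has_real_derivative c) (at 0)" by (auto intro!: derivative_eq_intros)
  from DERIV_cmult[OF DERIV_chain2[OF h this], of a]
  have "((\<lambda>t. a * w (c *\<^sub>R x + (c * t) *\<^sub>R axis i 1)) has_real_derivative a * (partial i w (c *\<^sub>R x) * c)) (at 0)" .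
  moreover have "(\<lambda>t. a * w (c *\<^sub>R (x + t *\<^sub>R axis i 1))) = (\<lambda>t. a * w (c *\<^sub>R x + (c * t) *\<^sub>R axis i 1))"
    by (simp add: scaleR_add_right)
  ultimately show ?thesis by simp
qed

lemma partials_scale:
  assumes "smooth u"
  shows "partials is (\<lambda>x. u (c *\<^sub>R x)) = (\<lambda>x. c ^ length is * partials is u (c *\<^sub>R x))"
proof (induction "is")
  case Nil then show ?case by simp
next
  case (Cons i "is")
  have ad: "adiff (partials is u)" using assms by (auto simp: smooth_alt)
  have "partials (i#is) (\<lambda>x. u (c *\<^sub>R x)) = partial i (\<lambda>x. c^length is * partials is u (c *\<^sub>R x))"
    using Cons by simp
  also have "\<dots> = (\<lambda>x. c^length is * (partial i (partials is u) (c *\<^sub>R x) * c))"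
    by (rule ext, rule partial_eqI, rule scale_has[OF ad])
  finally show ?case by (simp add: mult_ac)
qed

lemma smooth_scale:
  assumes "smooth u"
  shows "smooth (\<lambda>x. u (c *\<^sub>R x))"
  unfolding smooth_alt partials_scale[OF assms]
proof
  fix "is" :: "'a list"
  have c: "continuous_on UNIV (partials is u)" and ad: "adiff (partials is u)"
    using assms by (auto simp: smooth_alt)
  have "continuous_on UNIV (\<lambda>x. partials is u (c *\<^sub>R x))"
    by (rule continuous_on_compose2[OF c]) (auto intro!: continuous_intros)
  then show "continuous_on UNIV (\<lambda>x. c ^ length is * partials is u (c *\<^sub>R x)) \<and>
         adiff (\<lambda>x. c ^ length is * partials is u (c *\<^sub>R x))"
    by (auto intro!: continuous_intros adiffI scale_has[OF ad])
qed

definition tame :: "nat \<Rightarrow> (real \<Rightarrow> real^'n::finite \<Rightarrow> real) \<Rightarrow> bool" where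
  "tame k u \<longleftrightarrow> (\<forall>e. 0 < e \<and> e \<le> 1 \<longrightarrow> smooth (u e)) \<and>
     (\<forall>is. \<exists>C. \<forall>e x. 0 < e \<and> e \<le> 1 \<longrightarrow> \<bar>partials is (u e) x\<bar> \<le> C * (1/e) ^ (k + length is))"

lemma tame_partial:
  assumes "tame k u"
  shows "tame (Suc k) (\<lambda>e. partial i (u e))"
  unfolding tame_def
proof (intro conjI allI impI)
  fix e :: real assume "0 < e \<and> e \<le> 1"
  then show "smooth (partial i (u e))" using assms by (auto simp: tame_def intro: smooth_partial)
next
  fix js :: "'a list"
  obtain C where C: "\<forall>e x. 0 < e \<and> e \<le> 1 \<longrightarrow> \<bar>partials (js @ [i]) (u e) x\<bar> \<le> C * (1/e) ^ (k + length (js @ [i]))"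
    using assms unfolding tame_def by blast
  have "partials (js @ [i]) (u e) = partials js (partial i (u e))" for e
    by (simp add: partials_append)
  then show "\<exists>C. \<forall>e x. 0 < e \<and> e \<le> 1 \<longrightarrow> \<bar>partials js (partial i (u e)) x\<bar> \<le> C * (1 / e) ^ (Suc k + length js)"
    using C by (intro exI[of _ C]) auto
qed

lemma tame_mult:
  assumes "tame k u" "tame l v"
  shows "tame (k + l) (\<lambda>e x. u e x * v e x)"
proof -
  have "\<forall>(u :: real \<Rightarrow> real^'a \<Rightarrow> real) v k l. tame k u \<longrightarrow> tame l v \<longrightarrow>
     (\<exists>C. \<forall>e x. 0 < e \<and> e \<le> 1 \<longrightarrow> \<bar>partials is (\<lambda>x. u e x * v e x) x\<bar> \<le> C * (1/e) ^ (k + l + length is))" for "is"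
  proof (induction "is" rule: rev_induct)
    case Nil
    show ?case
    proof (intro allI impI)
      fix u v :: "real \<Rightarrow> real^'a \<Rightarrow> real" and k l
      assume u: "tame k u" and v: "tame l v"
      obtain C1 where C1: "\<forall>e x. 0 < e \<and> e \<le> 1 \<longrightarrow> \<bar>u e x\<bar> \<le> C1 * (1/e) ^ k"
        using u unfolding tame_def by (metis partials.simps(1) list.size(3) add_0_right)
      obtain C2 where C2: "\<forall>e x. 0 < e \<and> e \<le> 1 \<longrightarrow> \<bar>v e x\<bar> \<le> C2 * (1/e) ^ l"
        using v unfolding tame_def by (metis partials.simps(1) list.size(3) add_0_right)
      have "\<bar>u e x * v e x\<bar> \<le> (C1 * C2) * (1/e) ^ (k + l)" if "0 < e" "e \<le> 1" for e x
      proof -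
        have "\<bar>u e x * v e x\<bar> = \<bar>u e x\<bar> * \<bar>v e x\<bar>" by (simp add: abs_mult)
        also have "\<dots> \<le> (C1 * (1/e) ^ k) * (C2 * (1/e) ^ l)"
          using C1 C2 that by (intro mult_mono) (auto intro: order_trans[OF abs_ge_zero])
        also have "\<dots> = (C1 * C2) * (1/e) ^ (k + l)" by (simp add: power_add)
        finally show ?thesis .
      qed
      then show "\<exists>C. \<forall>e x. 0 < e \<and> e \<le> 1 \<longrightarrow> \<bar>partials [] (\<lambda>x. u e x * v e x) x\<bar> \<le> C * (1 / e) ^ (k + l + length [])"
        by auto
    qed
  next
    case (snoc i js)
    show ?case
    proof (intro allI impI)
      fix u v :: "real \<Rightarrow> real^'a \<Rightarrow> real" and k l
      assume u: "tame k u" and v: "tame l v"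
      have len1: "Suc k + l + length js = k + l + length (js @ [i])" by simp
      have len2: "k + Suc l + length js = k + l + length (js @ [i])" by simp
      obtain C1 where C1: "\<forall>e x. 0 < e \<and> e \<le> 1 \<longrightarrow> \<bar>partials js (\<lambda>x. partial i (u e) x * v e x) x\<bar> \<le> C1 * (1/e) ^ (k + l + length (js @ [i]))"
        using snoc[rule_format, OF tame_partial[OF u, of i] v] unfolding len1 by blast
      obtain C2 where C2: "\<forall>e x. 0 < e \<and> e \<le> 1 \<longrightarrow> \<bar>partials js (\<lambda>x. u e x * partial i (v e) x) x\<bar> \<le> C2 * (1/e) ^ (k + l + length (js @ [i]))"
        using snoc[rule_format, OF u tame_partial[OF v, of i]] unfolding len2 by blast
      have "\<bar>partials (js @ [i]) (\<lambda>x. u e x * v e x) x\<bar> \<le> (C1 + C2) * (1/e) ^ (k + l + length (js @ [i]))"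
        if e: "0 < e" "e \<le> 1" for e x
      proof -
        have su: "smooth (u e)" "smooth (v e)" using u v e by (auto simp: tame_def)
        have ad: "adiff (u e)" "adiff (v e)" using su by (auto simp: smooth_alt dest: spec[of _ "[]"])
        have s1: "smooth (\<lambda>x. partial i (u e) x * v e x)" "smooth (\<lambda>x. u e x * partial i (v e) x)"
          using su by (auto intro: smooth_mult smooth_partial)
        have "partials (js @ [i]) (\<lambda>x. u e x * v e x) = partials js (\<lambda>x. partial i (u e) x * v e x + u e x * partial i (v e) x)"
          by (simp add: partials_append partial_mult[OF ad])
        also have "\<dots> = (\<lambda>x. partials js (\<lambda>x. partial i (u e) x * v e x) x + partials js (\<lambda>x. u e x * partial i (v e) x) x)"
          using s1 by (intro partials_add) (auto simp: smooth_alt)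
        finally have eq: "partials (js @ [i]) (\<lambda>x. u e x * v e x) x = partials js (\<lambda>x. partial i (u e) x * v e x) x + partials js (\<lambda>x. u e x * partial i (v e) x) x"
          by simp
        have dd: "(C1 + C2) * (1/e) ^ (k + l + length (js @ [i])) = C1 * (1/e) ^ (k + l + length (js @ [i])) + C2 * (1/e) ^ (k + l + length (js @ [i]))"
          by (rule distrib_right)
        show ?thesis unfolding eq using C1[rule_format, of e x] C2[rule_format, of e x] e dd
          abs_triangle_ineq[of "partials js (\<lambda>x. partial i (u e) x * v e x) x" "partials js (\<lambda>x. u e x * partial i (v e) x) x"]
          by linarith
      qed
      then show "\<exists>C. \<forall>e x. 0 < e \<and> e \<le> 1 \<longrightarrow> \<bar>partials (js @ [i]) (\<lambda>x. u e x * v e x) x\<bar> \<le> C * (1 / e) ^ (k + l + length (js @ [i]))"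
        by blast
    qed
  qed
  then show ?thesis using assms unfolding tame_def
    by (auto intro: smooth_mult)
qed

lemma tame_const_fam:
  assumes "smooth w" "compact K" "\<forall>x. x \<notin> K \<longrightarrow> w x = 0"
  shows "tame 0 (\<lambda>e. w)"
  unfolding tame_def
proof (intro conjI allI impI)
  fix "is" :: "'a list"
  obtain M where M: "\<forall>x. \<bar>partials is w x\<bar> \<le> M" using partials_bounded[OF assms] by blast
  have "\<bar>partials is w x\<bar> \<le> M * (1/e) ^ length is" if "0 < e" "e \<le> 1" for e x
  proof -
    have "1 \<le> (1/e) ^ length is" using that by (intro one_le_power) auto
    moreover have "0 \<le> M" using M order_trans[OF abs_ge_zero] by blast
    ultimately have "M \<le> M * (1/e) ^ length is" by (metis mult_left_mono mult.right_neutral)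
    then show ?thesis using M by (meson order_trans)
  qed
  then show "\<exists>C. \<forall>e x. 0 < e \<and> e \<le> 1 \<longrightarrow> \<bar>partials is w x\<bar> \<le> C * (1 / e) ^ (0 + length is)"
    by auto
qed (use assms in auto)

lemma tame_scale_fam:
  assumes "smooth w" "compact K" "\<forall>x. x \<notin> K \<longrightarrow> w x = 0"
  shows "tame 0 (\<lambda>e x. w ((1/e) *\<^sub>R x))"
  unfolding tame_def
proof (intro conjI allI impI)
  fix "is" :: "'a list"
  obtain M where M: "\<forall>x. \<bar>partials is w x\<bar> \<le> M" using partials_bounded[OF assms] by blast
  have "\<bar>partials is (\<lambda>x. w ((1/e) *\<^sub>R x)) x\<bar> \<le> M * (1/e) ^ length is" if "0 < e" "e \<le> 1" for e x
  proof -
    have "\<bar>partials is (\<lambda>x. w ((1/e) *\<^sub>R x)) x\<bar> = (1/e) ^ length is * \<bar>partials is w ((1/e) *\<^sub>R x)\<bar>"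
      using that by (simp add: partials_scale[OF assms(1)] abs_mult)
    also have "\<dots> \<le> (1/e) ^ length is * M"
      using M that by (intro mult_left_mono) auto
    finally show ?thesis by (simp add: mult.commute)
  qed
  then show "\<exists>C. \<forall>e x. 0 < e \<and> e \<le> 1 \<longrightarrow> \<bar>partials is (\<lambda>x. w ((1/e) *\<^sub>R x)) x\<bar> \<le> C * (1 / e) ^ (0 + length is)"
    by auto
qed (use assms in \<open>auto intro: smooth_scale\<close>)




lemma ball_sets: "ball (0::real^'n::finite) r \<in> sets lebesgue"
  using lmeasurable_ball by (rule fmeasurableD)

lemma fin_MB: "finite_measure (lebesgue_on (ball (0::real^'n::finite) 1))"
  by (rule finite_measure_lebesgue_on) simp

lemma meas_cont: "continuous_on UNIV w \<Longrightarrow> (w :: real^'n::finite \<Rightarrow> real) \<in> borel_measurable (lebesgue_on (ball 0 1))"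
  by (rule continuous_imp_measurable_on_sets_lebesgue) (auto intro: continuous_on_subset ball_sets)

lemma meas_ind: "indicator (ball (0::real^'n::finite) r) \<in> borel_measurable (lebesgue_on (ball 0 1))"
  by (rule measurable_restrict_space1, rule borel_measurable_indicator, rule ball_sets)

lemma int_mult_bdd:
  fixes h w :: "real^'n::finite \<Rightarrow> real"
  assumes "integrable M h" "w \<in> borel_measurable M" "\<forall>x. \<bar>w x\<bar> \<le> K"
  shows "integrable M (\<lambda>x. h x * w x)"
proof (rule Bochner_Integration.integrable_bound[where f= "\<lambda>x. K * \<bar>h x\<bar>"])
  show "integrable M (\<lambda>x. K * \<bar>h x\<bar>)" using assms(1) by auto
  have "h \<in> borel_measurable M" using assms(1) by auto
  then show "(\<lambda>x. h x * w x) \<in> borel_measurable M" using assms(2) by measurable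
  have "norm (h x * w x) \<le> norm (K * \<bar>h x\<bar>)" for x
  proof -
    have K: "0 \<le> K" using assms(3) order_trans[OF abs_ge_zero] by blast
    have "norm (h x * w x) = \<bar>h x\<bar> * \<bar>w x\<bar>" by (simp add: abs_mult)
    also have "\<dots> \<le> \<bar>h x\<bar> * K" using assms(3) by (intro mult_left_mono) auto
    finally show ?thesis using K by (simp add: abs_mult mult.commute)
  qed
  then show "AE x in M. norm (h x * w x) \<le> norm (K * \<bar>h x\<bar>)" by simp
qed

lemma Lp_int:
  assumes "in_Lp p (ball 0 1) f" "1 \<le> p"
  shows "integrable (lebesgue_on (ball (0::real^'n::finite) 1)) f"
proof (rule Bochner_Integration.integrable_bound[where f= "\<lambda>x. 1 + \<bar>f x\<bar> powr p"])
  interpret finite_measure "lebesgue_on (ball (0::real^'n) 1)" by (rule fin_MB)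
  show "integrable (lebesgue_on (ball 0 1)) (\<lambda>x. 1 + \<bar>f x\<bar> powr p)"
    using assms(1) unfolding in_Lp_def by auto
  show "f \<in> borel_measurable (lebesgue_on (ball 0 1))" using assms(1) unfolding in_Lp_def by auto
  have "\<bar>f x\<bar> \<le> 1 + \<bar>f x\<bar> powr p" for x
  proof (cases "\<bar>f x\<bar> \<le> 1")
    case True then show ?thesis by (smt (verit) powr_ge_zero)
  next
    case False
    then have "\<bar>f x\<bar> powr 1 \<le> \<bar>f x\<bar> powr p" using assms(2) by (intro powr_mono) auto
    then show ?thesis using False by simp
  qed
  then show "AE x in lebesgue_on (ball 0 1). norm (f x) \<le> norm (1 + \<bar>f x\<bar> powr p)" by simp
qed

lemma lebesgue_singleton: "emeasure lebesgue {x::real^'n::finite} = 0"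
  by (simp add: emeasure_completion)

lemma int_Bstar:
  fixes h :: "real^'n::finite \<Rightarrow> real"
  shows "integral\<^sup>L (lebesgue_on (ball 0 1 - {0})) h = integral\<^sup>L (lebesgue_on (ball 0 1)) h"
proof -
  have s1: "ball (0::real^'n) 1 - {0} \<in> sets lebesgue"
    using ball_sets by (intro sets.Diff) auto
  have "integral\<^sup>L (lebesgue_on (ball 0 1 - {0})) h = integral\<^sup>L lebesgue (\<lambda>x. indicator (ball 0 1 - {0}) x *\<^sub>R h x)"
    using s1 by (intro integral_restrict_space) auto
  also have "\<dots> = integral\<^sup>L lebesgue (\<lambda>x. indicator (ball 0 1) x *\<^sub>R h x)"
    by (rule integral_discrete_difference[where X="{0}"]) (auto simp: lebesgue_singleton indicator_def)
  also have "\<dots> = integral\<^sup>L (lebesgue_on (ball 0 1)) h"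
    using ball_sets by (intro integral_restrict_space[symmetric]) auto
  finally show ?thesis .
qed

lemma AE_MB_nz: "AE x in lebesgue_on (ball (0::real^'n::finite) 1). x \<noteq> 0"
proof -
  have "AE x in lebesgue. (x::real^'n) \<noteq> 0"
    by (rule AE_completion[OF AE_lborel_singleton])
  then show ?thesis using ball_sets by (subst AE_restrict_space_iff) auto
qed

lemma shrink:
  fixes h :: "real^'n::finite \<Rightarrow> real"
  assumes h: "integrable (lebesgue_on (ball 0 1)) h" and nn: "\<forall>x. 0 \<le> h x" and d: "\<delta> > 0"
  shows "\<exists>r>0. \<forall>r'. 0 < r' \<and> r' \<le> r \<longrightarrow> integral\<^sup>L (lebesgue_on (ball 0 1)) (\<lambda>x. h x * indicator (ball 0 r') x) < \<delta>"
proof -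
  let ?M = "lebesgue_on (ball (0::real^'n) 1)"
  define s where "s k x = h x * indicator (ball 0 (1 / Suc k)) x" for k x
  have hm: "h \<in> borel_measurable ?M" using h by auto
  have int_s: "integrable ?M (\<lambda>x. h x * indicator (ball 0 r) x)" for r
    using h meas_ind by (rule int_mult_bdd[where K=1]) (auto simp: indicator_def)
  have "(\<lambda>k. integral\<^sup>L ?M (s k)) \<longlonglongrightarrow> integral\<^sup>L ?M (\<lambda>x. 0)"
  proof (rule integral_dominated_convergence[where w=h])
    show "(\<lambda>x. 0::real) \<in> borel_measurable ?M" by simp
    show "s k \<in> borel_measurable ?M" for k unfolding s_def using hm meas_ind by measurable
    show "integrable ?M h" by (rule h)
    show "AE x in ?M. norm (s k x) \<le> h x" for k
      using nn by (auto simp: s_def indicator_def)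
    show "AE x in ?M. (\<lambda>k. s k x) \<longlonglongrightarrow> 0"
      using AE_MB_nz
    proof eventually_elim
      fix x :: "real^'n" assume "x \<noteq> 0"
      then have "norm x > 0" by simp
      then obtain N where N: "inverse (real (Suc N)) < norm x" using reals_Archimedean by blast
      have "eventually (\<lambda>k. s k x = 0) sequentially"
        unfolding eventually_sequentially
      proof (intro exI allI impI)
        fix k assume "N \<le> k"
        then have "1 / real (Suc k) \<le> inverse (real (Suc N))"
          by (simp add: divide_inverse frac_le inverse_le_iff_le)
        then show "s k x = 0" using N by (simp add: s_def indicator_def)
      qed
      then show "(\<lambda>k. s k x) \<longlonglongrightarrow> 0" by (rule tendsto_eventually)
    qed
  qed
  then have "(\<lambda>k. integral\<^sup>L ?M (s k)) \<longlonglongrightarrow> 0" by simp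
  from order_tendstoD(2)[OF this d] obtain N where N: "\<forall>k\<ge>N. integral\<^sup>L ?M (s k) < \<delta>"
    unfolding eventually_sequentially by blast
  show ?thesis
  proof (intro exI[of _ "1 / Suc N"] conjI allI impI)
    fix r' :: real assume r': "0 < r' \<and> r' \<le> 1 / Suc N"
    have "integral\<^sup>L ?M (\<lambda>x. h x * indicator (ball 0 r') x) \<le> integral\<^sup>L ?M (s N)"
      unfolding s_def
      by (rule integral_mono[OF int_s int_s]) (use nn r' in \<open>auto simp: indicator_def\<close>)
    then show "integral\<^sup>L ?M (\<lambda>x. h x * indicator (ball 0 r') x) < \<delta>" using N by force
  qed simp
qed

lemma ball_int:
  assumes "0 \<le> r" "r \<le> 1"
  shows "integral\<^sup>L (lebesgue_on (ball (0::real^'n::finite) 1)) (indicator (ball 0 r)) = r ^ CARD('n) * measure lborel (ball (0::real^'n) 1)"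
proof -
  have sp: "space (lebesgue_on (ball (0::real^'n) 1)) = ball 0 1" using ball_sets by simp
  have sub: "ball (0::real^'n) r \<subseteq> ball 0 1" using assms by auto
  have "integral\<^sup>L (lebesgue_on (ball (0::real^'n) 1)) (indicator (ball 0 r)) = measure (lebesgue_on (ball 0 1)) (ball (0::real^'n) r)"
    using sp sub by (simp add: Int_absorb2)
  also have "\<dots> = measure lebesgue (ball (0::real^'n) r)"
    using ball_sets sub by (intro measure_restrict_space) auto
  also have "\<dots> = measure lborel (ball (0::real^'n) r)"
    by simp
  also have "\<dots> = r ^ CARD('n) * measure lborel (ball (0::real^'n) 1)"
    using content_ball_conv_unit_ball[OF assms(1), of "0::real^'n"] by simp
  finally show ?thesis .
qed




lemma smooth_cong: "smooth u \<Longrightarrow> (\<And>x. u x = v x) \<Longrightarrow> smooth v"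
  by (metis ext)

definition qn :: "real^'n::finite \<Rightarrow> real" where "qn x = (\<Sum>j\<in>UNIV. x $ j * x $ j)"
definition Aa :: "real^'n::finite \<Rightarrow> real" where "Aa x = dE 0 (2 - qn x)"
definition Bb :: "real^'n::finite \<Rightarrow> real" where "Bb x = dE 0 (qn x - 1)"
definition psi :: "real^'n::finite \<Rightarrow> real" where "psi x = dR 0 (Aa x + Bb x) * Aa x"

lemma qn_norm: "qn x = norm x ^ 2"
  by (simp add: qn_def power2_norm_eq_inner inner_vec_def)

lemma smooth_qn: "smooth qn"
  unfolding qn_def[abs_def] by (intro smooth_sum smooth_mult smooth_coord) auto

lemma smooth_Aa: "smooth Aa"
proof -
  have "smooth (\<lambda>x. 1 * 2 + (-1) * qn x)" by (rule smooth_lin[OF smooth_const smooth_qn])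
  then have "smooth (\<lambda>x. 2 - qn x)" by (rule smooth_cong) simp
  then show ?thesis unfolding Aa_def[abs_def] using smooth_comp[OF dseq_dE] by blast
qed

lemma smooth_Bb: "smooth Bb"
proof -
  have "smooth (\<lambda>x. 1 * qn x + (-1) * 1)" by (rule smooth_lin[OF smooth_qn smooth_const])
  then have "smooth (\<lambda>x. qn x - 1)" by (rule smooth_cong) simp
  then show ?thesis unfolding Bb_def[abs_def] using smooth_comp[OF dseq_dE] by blast
qed

lemma dE0_nonneg: "0 \<le> dE 0 t" by (simp add: dE_def)
lemma dE0_pos: "t > 0 \<Longrightarrow> 0 < dE 0 t" by (simp add: dE_def)

lemma AB_pos: "0 < Aa x + Bb x"
proof (cases "qn x \<le> 3/2")
  case True
  then have "0 < Aa x" unfolding Aa_def by (intro dE0_pos) simp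
  then show ?thesis using dE0_nonneg[of "qn x - 1"] by (simp add: Bb_def)
next
  case False
  then have "0 < Bb x" unfolding Bb_def by (intro dE0_pos) simp
  then show ?thesis using dE0_nonneg[of "2 - qn x"] by (simp add: Aa_def)
qed

lemma smooth_psi: "smooth psi"
  unfolding psi_def[abs_def]
  by (rule smooth_comp_mult[OF dseq_dR _ smooth_add[OF smooth_Aa smooth_Bb] smooth_Aa]) (use AB_pos in auto)

lemma psi_one: "norm x \<le> 1 \<Longrightarrow> psi x = 1"
proof -
  assume "norm x \<le> 1"
  then have q: "qn x \<le> 1" unfolding qn_norm by (simp add: power_le_one)
  then have "Bb x = 0" by (simp add: Bb_def dE_def)
  moreover have "Aa x > 0" using q unfolding Aa_def by (intro dE0_pos) simp
  ultimately show "psi x = 1" by (simp add: psi_def dR0)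
qed

lemma psi_zero: "2 \<le> norm x \<Longrightarrow> psi x = 0"
proof -
  assume "2 \<le> norm x"
  then have "(2::real)^2 \<le> norm x ^ 2" by (intro power_mono) auto
  then have "qn x \<ge> 2" unfolding qn_norm by simp
  then have "Aa x = 0" by (simp add: Aa_def dE_def)
  then show "psi x = 0" by (simp add: psi_def)
qed

lemma psi_zero_outside: "\<forall>x. x \<notin> cball 0 2 \<longrightarrow> psi x = 0"
  by (auto intro!: psi_zero)

lemma count_list_rep: "count_list (replicate n a) x = (if a = x then n else 0)"
  by (induction n) auto

lemma count_concat: "distinct xs \<Longrightarrow>
   count_list (concat (map (\<lambda>i. replicate (a i) i) xs)) j = (if j \<in> set xs then a j else 0)"
  by (induction xs) (auto simp: count_list_append count_list_rep)

lemma list_exists: "\<exists>is. \<forall>i. count_list is i = (\<alpha> :: 'n::finite \<Rightarrow> nat) i"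
proof -
  obtain xs where xs: "set xs = (UNIV :: 'n set)" "distinct xs"
    using finite_distinct_list[of "UNIV :: 'n set"] by auto
  show ?thesis using count_concat[OF xs(2), of \<alpha>] xs(1) by (intro exI[of _ "concat (map (\<lambda>i. replicate (\<alpha> i) i) xs)"]) auto
qed

lemma sign_tri: "\<bar>a - (-1::real)^k * b\<bar> \<le> \<bar>a\<bar> + \<bar>b\<bar>"
proof -
  have "\<bar>a - (-1::real)^k * b\<bar> \<le> \<bar>a\<bar> + \<bar>(-1::real)^k * b\<bar>" by (rule abs_triangle_ineq4)
  also have "\<bar>(-1::real)^k * b\<bar> = \<bar>b\<bar>" by (simp add: abs_mult)
  finally show ?thesis .
qed

lemma key_bound:
  fixes \<alpha> :: "'n::finite \<Rightarrow> nat" and f g \<phi> :: "real^'n \<Rightarrow> real" and L :: "'n list"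
  assumes hyp: "distrib_deriv_eq \<alpha> f g (ball 0 1 - {0})"
    and DA: "\<And>w. Dalpha \<alpha> w = partials L w"
    and fint: "integrable (lebesgue_on (ball 0 1)) f"
    and gint: "integrable (lebesgue_on (ball 0 1)) g"
    and sphi: "smooth \<phi>" and K: "compact K" "K \<subseteq> ball 0 1" "\<forall>x. x \<notin> K \<longrightarrow> \<phi> x = 0"
    and e: "0 < e" "e \<le> 1/3"
    and C: "\<forall>x. \<bar>partials L (\<lambda>x. \<phi> x * psi ((1/e) *\<^sub>R x)) x\<bar> \<le> C"
    and C0: "\<forall>x. \<bar>\<phi> x * psi ((1/e) *\<^sub>R x)\<bar> \<le> C0"
  shows "\<bar>(LINT x|lebesgue_on (ball 0 1). f x * partials L \<phi> x) - (-1)^(mi_order \<alpha>) * (LINT x|lebesgue_on (ball 0 1). g x * \<phi> x)\<bar>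
        \<le> C * (LINT x|lebesgue_on (ball 0 1). \<bar>f x\<bar> * indicator (ball 0 (3*e)) x)
         + C0 * (LINT x|lebesgue_on (ball 0 1). \<bar>g x\<bar> * indicator (ball 0 (3*e)) x)"
proof -
  let ?M = "lebesgue_on (ball (0::real^'n) 1)"
  let ?s = "(-1::real)^(mi_order \<alpha>)"
  define pe where "pe x = psi ((1/e) *\<^sub>R x)" for x :: "real^'n"
  define p1 where "p1 x = \<phi> x * (1 - pe x)" for x
  define p2 where "p2 x = \<phi> x * pe x" for x
  have spe: "smooth pe" unfolding pe_def[abs_def] by (rule smooth_scale[OF smooth_psi])
  have s1: "smooth p1"
  proof -
    have "smooth (\<lambda>x. 1 * 1 + (-1) * pe x)" by (rule smooth_lin[OF smooth_const spe])
    then have "smooth (\<lambda>x. 1 - pe x)" by (rule smooth_cong) simp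
    then show ?thesis unfolding p1_def[abs_def] by (rule smooth_mult[OF sphi])
  qed
  have s2: "smooth p2" unfolding p2_def[abs_def] by (rule smooth_mult[OF sphi spe])
  have pe_one: "norm x \<le> e \<Longrightarrow> pe x = 1" for x
    unfolding pe_def using e by (intro psi_one) (simp add: divide_le_eq)
  have pe_zero: "2 * e \<le> norm x \<Longrightarrow> pe x = 0" for x
    unfolding pe_def using e by (intro psi_zero) (simp add: le_divide_eq mult.commute)
  have z1: "\<forall>x. x \<notin> K \<longrightarrow> p1 x = 0" and z2: "\<forall>x. x \<notin> K \<longrightarrow> p2 x = 0"
    using K(3) by (auto simp: p1_def p2_def)
  have z2b: "\<forall>x. x \<notin> cball 0 (2*e) \<longrightarrow> p2 x = 0"
    using pe_zero by (auto simp: p2_def)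
  have tf1: "test_function (ball 0 1 - {0}) p1"
  proof -
    have sub: "{x. p1 x \<noteq> 0} \<subseteq> K \<inter> - ball 0 e"
      using z1 pe_one by (force simp: p1_def)
    have cl: "closed (K \<inter> - ball 0 e)" using K(1) by (intro closed_Int compact_imp_closed) auto
    have "closure {x. p1 x \<noteq> 0} \<subseteq> K \<inter> - ball 0 e" by (rule closure_minimal[OF sub cl])
    moreover have "bounded {x. p1 x \<noteq> 0}"
      using sub compact_imp_bounded[OF K(1)] by (meson bounded_subset le_infE)
    ultimately show ?thesis unfolding test_function_def using s1 K(2) e by auto
  qed
  from hyp tf1 have "(LINT x|lebesgue_on (ball 0 1 - {0}). f x * Dalpha \<alpha> p1 x)
        = ?s * (LINT x|lebesgue_on (ball 0 1 - {0}). g x * p1 x)"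
    unfolding distrib_deriv_eq_def by blast
  then have I1: "(LINT x|?M. f x * partials L p1 x) = ?s * (LINT x|?M. g x * p1 x)"
    by (simp add: int_Bstar DA)
  have phi_eq: "\<phi> = (\<lambda>x. p1 x + p2 x)" by (auto simp: p1_def p2_def algebra_simps)
  have pL: "partials L \<phi> x = partials L p1 x + partials L p2 x" for x
  proof -
    have "partials L (\<lambda>x. p1 x + p2 x) = (\<lambda>x. partials L p1 x + partials L p2 x)"
      using s1 s2 by (intro partials_add) (auto simp: smooth_alt)
    then show ?thesis by (subst phi_eq) simp
  qed
  obtain B1 where B1: "\<forall>x. \<bar>partials L p1 x\<bar> \<le> B1" using partials_bounded[OF s1 K(1) z1] by blast
  obtain B2 where B2: "\<forall>x. \<bar>partials L p2 x\<bar> \<le> B2" using partials_bounded[OF s2 K(1) z2] by blast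
  obtain B3 where B3: "\<forall>x. \<bar>partials [] p1 x\<bar> \<le> B3" using partials_bounded[OF s1 K(1) z1] by blast
  obtain B4 where B4: "\<forall>x. \<bar>partials [] p2 x\<bar> \<le> B4" using partials_bounded[OF s2 K(1) z2] by blast
  have cont: "continuous_on UNIV (partials is w)" if "smooth w" for w and "is" :: "'n list"
    using that by (auto simp: smooth_alt)
  have i1: "integrable ?M (\<lambda>x. f x * partials L p1 x)"
    using fint meas_cont[OF cont[OF s1]] B1 by (rule int_mult_bdd)
  have i2: "integrable ?M (\<lambda>x. f x * partials L p2 x)"
    using fint meas_cont[OF cont[OF s2]] B2 by (rule int_mult_bdd)
  have i3: "integrable ?M (\<lambda>x. g x * p1 x)"
    using gint meas_cont[OF cont[OF s1, of "[]"]] B3 by (intro int_mult_bdd) auto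
  have i4: "integrable ?M (\<lambda>x. g x * p2 x)"
    using gint meas_cont[OF cont[OF s2, of "[]"]] B4 by (intro int_mult_bdd) auto
  have E1: "(LINT x|?M. f x * partials L \<phi> x) = (LINT x|?M. f x * partials L p1 x) + (LINT x|?M. f x * partials L p2 x)"
    unfolding pL distrib_left by (rule Bochner_Integration.integral_add[OF i1 i2])
  have E2: "(LINT x|?M. g x * \<phi> x) = (LINT x|?M. g x * p1 x) + (LINT x|?M. g x * p2 x)"
    by (subst phi_eq, unfold distrib_left, rule Bochner_Integration.integral_add[OF i3 i4])
  have EQ: "(LINT x|?M. f x * partials L \<phi> x) - ?s * (LINT x|?M. g x * \<phi> x)
       = (LINT x|?M. f x * partials L p2 x) - ?s * (LINT x|?M. g x * p2 x)"
    unfolding E1 E2 I1 by (simp add: algebra_simps)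
  have "\<bar>(LINT x|?M. f x * partials L \<phi> x) - ?s * (LINT x|?M. g x * \<phi> x)\<bar>
       \<le> \<bar>LINT x|?M. f x * partials L p2 x\<bar> + \<bar>LINT x|?M. g x * p2 x\<bar>"
    unfolding EQ by (rule sign_tri)
  also have "\<bar>LINT x|?M. f x * partials L p2 x\<bar> \<le> C * (LINT x|?M. \<bar>f x\<bar> * indicator (ball 0 (3*e)) x)"
  proof -
    have Cn: "0 \<le> C" using C order_trans[OF abs_ge_zero] by blast
    have "\<bar>LINT x|?M. f x * partials L p2 x\<bar> \<le> (LINT x|?M. \<bar>f x * partials L p2 x\<bar>)" by simp
    also have "\<dots> \<le> (LINT x|?M. C * (\<bar>f x\<bar> * indicator (ball 0 (3*e)) x))"
    proof (rule integral_mono)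
      show "integrable ?M (\<lambda>x. \<bar>f x * partials L p2 x\<bar>)" using i2 by auto
      show "integrable ?M (\<lambda>x. C * (\<bar>f x\<bar> * indicator (ball 0 (3*e)) x))"
        by (rule integrable_mult_right, rule int_mult_bdd[OF integrable_abs[OF fint] meas_ind, where K=1]) (simp add: indicator_def)
      fix x :: "real^'n"
      show "\<bar>f x * partials L p2 x\<bar> \<le> C * (\<bar>f x\<bar> * indicator (ball 0 (3*e)) x)"
      proof (cases "x \<in> ball 0 (3*e)")
        case True
        have b: "\<bar>partials L p2 x\<bar> \<le> C" using C unfolding p2_def pe_def by blast
        have "\<bar>f x * partials L p2 x\<bar> = \<bar>f x\<bar> * \<bar>partials L p2 x\<bar>" by (simp add: abs_mult)
        also have "\<dots> \<le> \<bar>f x\<bar> * C" using b by (intro mult_left_mono) auto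
        finally show ?thesis using True by (simp add: mult.commute)
      next
        case False
        then have "x \<notin> cball 0 (2*e)" using e by auto
        then have "partials L p2 x = 0" by (rule partials_zero_outside[OF compact_cball z2b])
        then show ?thesis using False by simp
      qed
    qed
    also have "\<dots> = C * (LINT x|?M. \<bar>f x\<bar> * indicator (ball 0 (3*e)) x)" by simp
    finally show ?thesis .
  qed
  also have "\<bar>LINT x|?M. g x * p2 x\<bar> \<le> C0 * (LINT x|?M. \<bar>g x\<bar> * indicator (ball 0 (3*e)) x)"
  proof -
    have Cn: "0 \<le> C0" using C0 order_trans[OF abs_ge_zero] by blast
    have "\<bar>LINT x|?M. g x * p2 x\<bar> \<le> (LINT x|?M. \<bar>g x * p2 x\<bar>)" by simp
    also have "\<dots> \<le> (LINT x|?M. C0 * (\<bar>g x\<bar> * indicator (ball 0 (3*e)) x))"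
    proof (rule integral_mono)
      show "integrable ?M (\<lambda>x. \<bar>g x * p2 x\<bar>)" using i4 by auto
      show "integrable ?M (\<lambda>x. C0 * (\<bar>g x\<bar> * indicator (ball 0 (3*e)) x))"
        by (rule integrable_mult_right, rule int_mult_bdd[OF integrable_abs[OF gint] meas_ind, where K=1]) (simp add: indicator_def)
      fix x :: "real^'n"
      show "\<bar>g x * p2 x\<bar> \<le> C0 * (\<bar>g x\<bar> * indicator (ball 0 (3*e)) x)"
      proof (cases "x \<in> ball 0 (3*e)")
        case True
        have b: "\<bar>p2 x\<bar> \<le> C0" using C0 unfolding p2_def pe_def by blast
        have "\<bar>g x * p2 x\<bar> = \<bar>g x\<bar> * \<bar>p2 x\<bar>" by (simp add: abs_mult)
        also have "\<dots> \<le> \<bar>g x\<bar> * C0" using b by (intro mult_left_mono) auto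
        finally show ?thesis using True by (simp add: mult.commute)
      next
        case False
        then have "x \<notin> cball 0 (2*e)" using e by auto
        then have "p2 x = 0" using z2b by blast
        then show ?thesis using False by simp
      qed
    qed
    also have "\<dots> = C0 * (LINT x|?M. \<bar>g x\<bar> * indicator (ball 0 (3*e)) x)" by simp
    finally show ?thesis .
  qed
  finally show ?thesis unfolding p2_def pe_def by simp
qed




lemma pow_trick:
  fixes y L p :: real
  assumes "0 \<le> y" "0 < L" "1 \<le> p"
  shows "y \<le> L + L powr (1 - p) * y powr p"
proof (cases "y \<le> L")
  case True
  have "0 \<le> L powr (1 - p) * y powr p" by simp
  then show ?thesis using True by linarith
next
  case False
  then have yL: "L < y" by simp
  have "y powr (1 - p) \<le> L powr (1 - p)"
    using yL assms by (intro powr_mono2') auto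
  then have "y powr p * y powr (1 - p) \<le> y powr p * L powr (1 - p)"
    by (intro mult_left_mono) auto
  moreover have "y powr p * y powr (1 - p) = y"
    using yL assms by (simp add: powr_add[symmetric])
  ultimately have "y \<le> L powr (1 - p) * y powr p" by (simp add: mult.commute)
  then show ?thesis using assms by linarith
qed

lemma lambda_trick:
  fixes f :: "real^'n::finite \<Rightarrow> real" and m :: nat and p t r :: real
  assumes fint: "integrable (lebesgue_on (ball 0 1)) f"
    and pint: "integrable (lebesgue_on (ball 0 1)) (\<lambda>x. \<bar>f x\<bar> powr p)"
    and mn: "m < CARD('n)" and p: "p = real CARD('n) / (real CARD('n) - real m)"
    and t: "0 < t" and r: "0 < r" "r \<le> 1"
  shows "(LINT x|lebesgue_on (ball 0 1). \<bar>f x\<bar> * indicator (ball 0 r) x)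
     \<le> t * r^m * measure lborel (ball (0::real^'n) 1)
       + t powr (1 - p) * r^m * (LINT x|lebesgue_on (ball 0 1). \<bar>f x\<bar> powr p * indicator (ball 0 r) x)"
proof -
  let ?M = "lebesgue_on (ball (0::real^'n) 1)"
  let ?n = "CARD('n)"
  let ?V = "measure lborel (ball (0::real^'n) 1)"
  define L where "L = t / r ^ (?n - m)"
  have L: "0 < L" using t r by (simp add: L_def)
  have p1: "1 \<le> p"
  proof -
    have "0 < real ?n - real m" using mn by simp
    then show ?thesis unfolding p by (simp add: le_divide_eq)
  qed
  have ii: "integrable ?M (indicator (ball 0 r) :: real^'n \<Rightarrow> real)"
  proof -
    interpret finite_measure ?M by (rule fin_MB)
    show ?thesis using meas_ind by (intro integrable_const_bound[where B=1]) (auto simp: indicator_def)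
  qed
  have i1: "integrable ?M (\<lambda>x. \<bar>f x\<bar> * indicator (ball 0 r) x)"
    by (rule int_mult_bdd[OF integrable_abs[OF fint] meas_ind, where K=1]) (simp add: indicator_def)
  have i2: "integrable ?M (\<lambda>x. \<bar>f x\<bar> powr p * indicator (ball 0 r) x)"
    by (rule int_mult_bdd[OF pint meas_ind, where K=1]) (simp add: indicator_def)
  have "(LINT x|?M. \<bar>f x\<bar> * indicator (ball 0 r) x)
      \<le> (LINT x|?M. L * indicator (ball 0 r) x + L powr (1 - p) * (\<bar>f x\<bar> powr p * indicator (ball 0 r) x))"
  proof (rule integral_mono[OF i1])
    show "integrable ?M (\<lambda>x. L * indicator (ball 0 r) x + L powr (1 - p) * (\<bar>f x\<bar> powr p * indicator (ball 0 r) x))"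
      using ii i2 by auto
    fix x :: "real^'n"
    show "\<bar>f x\<bar> * indicator (ball 0 r) x \<le> L * indicator (ball 0 r) x + L powr (1 - p) * (\<bar>f x\<bar> powr p * indicator (ball 0 r) x)"
      using pow_trick[OF abs_ge_zero L p1, of "f x"] by (simp add: indicator_def)
  qed
  also have "\<dots> = L * (LINT x|?M. indicator (ball 0 r) x) + L powr (1 - p) * (LINT x|?M. \<bar>f x\<bar> powr p * indicator (ball 0 r) x)"
    using ii i2 by simp
  also have "(LINT x|?M. indicator (ball 0 r) x) = r ^ ?n * ?V"
    using ball_int[of r] r by simp
  also have "L * (r ^ ?n * ?V) = t * r^m * ?V"
  proof -
    have "r ^ ?n = r ^ (?n - m) * r ^ m" using mn by (simp add: power_add[symmetric])
    then show ?thesis using r by (simp add: L_def)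
  qed
  also have "L powr (1 - p) = t powr (1 - p) * r ^ m"
  proof -
    have nm: "real (?n - m) = real ?n - real m" using mn by simp
    have nm0: "real ?n - real m > 0" using mn by simp
    have "(r ^ (?n - m)) powr (1 - p) = (r powr real (?n - m)) powr (1 - p)"
      using r by (simp add: powr_realpow)
    also have "\<dots> = r powr (real (?n - m) * (1 - p))" by (simp add: powr_powr)
    also have "real (?n - m) * (1 - p) = - real m"
      unfolding nm p using nm0 by (simp add: field_simps)
    also have "r powr (- real m) = inverse (r ^ m)"
      using r by (simp add: powr_minus powr_realpow)
    finally have e1: "(r ^ (?n - m)) powr (1 - p) = inverse (r ^ m)" .
    have "L powr (1 - p) = t powr (1 - p) / (r ^ (?n - m)) powr (1 - p)"
      unfolding L_def using t r by (simp add: powr_divide)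
    then show ?thesis unfolding e1 by (simp add: divide_inverse)
  qed
  finally show ?thesis by simp
qed

theorem proposition2p1:
  fixes \<alpha> :: "'n::finite \<Rightarrow> nat" and m :: nat
    and f g :: "real^'n \<Rightarrow> real"
  assumes "mi_order \<alpha> = m" and "1 \<le> m" and "m < CARD('n)"
    and "in_Lp (real CARD('n) / (real CARD('n) - real m)) (ball 0 1) f"
    and "in_Lp 1 (ball 0 1) g"
    and "distrib_deriv_eq \<alpha> f g (ball 0 1 - {0})"
  shows "distrib_deriv_eq \<alpha> f g (ball 0 1)"
proof -
  note mo = assms(1) and mn = assms(3) and hyp = assms(6)
  let ?M = "lebesgue_on (ball (0::real^'n) 1)"
  let ?V = "measure lborel (ball (0::real^'n) 1)"
  define p where "p = real CARD('n) / (real CARD('n) - real m)"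
  have p1: "1 \<le> p"
  proof -
    have "0 < real CARD('n) - real m" using mn by simp
    then show ?thesis unfolding p_def by (simp add: le_divide_eq)
  qed
  have fint: "integrable ?M f" using Lp_int[OF assms(4)[folded p_def] p1] .
  have gint: "integrable ?M g" using Lp_int[OF assms(5)] by simp
  have pint: "integrable ?M (\<lambda>x. \<bar>f x\<bar> powr p)" using assms(4)[folded p_def] by (simp add: in_Lp_def)
  define L where "L = (SOME is. \<forall>i. count_list is i = \<alpha> i)"
  have hL: "\<forall>i. count_list L i = \<alpha> i"
    unfolding L_def by (rule someI_ex[OF list_exists])
  have DA: "\<And>w. Dalpha \<alpha> w = partials L w" by (simp add: Dalpha_def L_def)
  have lenL: "length L = m"
  proof -
    have "length L = sum (count_list L) UNIV" by (rule sum_count_set[symmetric]) auto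
    also have "\<dots> = m" using hL mo by (simp add: mi_order_def)
    finally show ?thesis .
  qed
  show ?thesis
    unfolding distrib_deriv_eq_def
  proof (intro allI impI)
    fix \<phi> :: "real^'n \<Rightarrow> real"
    assume tf: "test_function (ball 0 1) \<phi>"
    define K where "K = closure {x. \<phi> x \<noteq> 0}"
    have sphi: "smooth \<phi>" and Kc: "compact K" and Ks: "K \<subseteq> ball 0 1"
      using tf by (auto simp: test_function_def K_def)
    have Kz: "\<forall>x. x \<notin> K \<longrightarrow> \<phi> x = 0"
    proof (intro allI impI)
      fix x assume "x \<notin> K"
      then have "x \<notin> {x. \<phi> x \<noteq> 0}" using closure_subset[of "{x. \<phi> x \<noteq> 0}"] unfolding K_def by blast
      then show "\<phi> x = 0" by simp
    qed
    have T: "tame (0 + 0) (\<lambda>e x. \<phi> x * psi ((1/e) *\<^sub>R x))"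
      by (rule tame_mult[OF tame_const_fam[OF sphi Kc Kz] tame_scale_fam[OF smooth_psi compact_cball psi_zero_outside]])
    obtain Cm where Cm: "\<forall>e x. 0 < e \<and> e \<le> 1 \<longrightarrow> \<bar>partials L (\<lambda>x. \<phi> x * psi ((1/e) *\<^sub>R x)) x\<bar> \<le> Cm * (1/e) ^ (0 + 0 + length L)"
      using T unfolding tame_def by blast
    obtain C00 where C00: "\<forall>e x. 0 < e \<and> e \<le> 1 \<longrightarrow> \<bar>partials [] (\<lambda>x. \<phi> x * psi ((1/e) *\<^sub>R x)) x\<bar> \<le> C00 * (1/e) ^ (0 + 0 + length ([] :: 'n list))"
      using T unfolding tame_def by blast
    have Cm0: "0 \<le> Cm"
    proof -
      have "\<bar>partials L (\<lambda>x. \<phi> x * psi ((1/1) *\<^sub>R x)) 0\<bar> \<le> Cm * (1/1) ^ (0 + 0 + length L)"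
        by (rule Cm[rule_format]) simp
      moreover have "0 \<le> \<bar>partials L (\<lambda>x. \<phi> x * psi ((1/1) *\<^sub>R x)) 0\<bar>" by (rule abs_ge_zero)
      ultimately show ?thesis by simp
    qed
    have C000: "0 \<le> C00"
    proof -
      have "\<bar>partials [] (\<lambda>x. \<phi> x * psi ((1/1) *\<^sub>R x)) 0\<bar> \<le> C00 * (1/1) ^ (0 + 0 + length ([] :: 'n list))"
        by (rule C00[rule_format]) simp
      moreover have "0 \<le> \<bar>partials [] (\<lambda>x. \<phi> x * psi ((1/1) *\<^sub>R x)) 0\<bar>" by (rule abs_ge_zero)
      ultimately show ?thesis by simp
    qed
    define D where "D = (LINT x|?M. f x * partials L \<phi> x) - (-1)^(mi_order \<alpha>) * (LINT x|?M. g x * \<phi> x)"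
    have "D = 0"
    proof (rule ccontr)
      assume "D \<noteq> 0"
      define d where "d = \<bar>D\<bar>"
      have d: "0 < d" using \<open>D \<noteq> 0\<close> by (simp add: d_def)
      have V0: "0 \<le> ?V" by simp
      define A where "A = Cm * 3 ^ m"
      have A0: "0 \<le> A" using Cm0 by (simp add: A_def)
      define t where "t = d / (4 * (A * ?V + 1))"
      have AV0: "0 \<le> A * ?V" using A0 V0 by simp
      have t0: "0 < t" using d AV0 by (simp add: t_def)
      have At: "A * t * ?V \<le> d / 4"
      proof -
        have "A * t * ?V = d / 4 * (A * ?V / (A * ?V + 1))" using AV0 by (simp add: t_def field_simps)
        also have "\<dots> \<le> d / 4 * 1" using AV0 d by (intro mult_left_mono) auto
        finally show ?thesis by simp
      qed
      define h where "h x = \<bar>f x\<bar> powr p + \<bar>g x\<bar>" for x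
      have hint: "integrable ?M h" unfolding h_def[abs_def] using pint gint by auto
      have hnn: "\<forall>x. 0 \<le> h x" by (simp add: h_def)
      define Q where "Q = A * t powr (1 - p) + C00 + 1"
      have "0 \<le> A * t powr (1 - p)" using A0 by simp
      then have Q0: "0 < Q" using C000 unfolding Q_def by linarith
      define \<delta> where "\<delta> = d / (4 * Q)"
      have \<delta>0: "0 < \<delta>" using d Q0 by (simp add: \<delta>_def)
      obtain r0 where r0: "r0 > 0" and r0b: "\<forall>r'. 0 < r' \<and> r' \<le> r0 \<longrightarrow> (LINT x|?M. h x * indicator (ball 0 r') x) < \<delta>"
        using shrink[OF hint hnn \<delta>0] by blast
      define e where "e = min (1/3) (r0/3)"
      have e0: "0 < e" "e \<le> 1/3" using r0 by (auto simp: e_def)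
      have r: "0 < 3*e" "3*e \<le> 1" "3*e \<le> r0" using e0 by (auto simp: e_def)
      have i_h: "integrable ?M (\<lambda>x. h x * indicator (ball 0 (3*e)) x)"
        by (rule int_mult_bdd[OF hint meas_ind, where K=1]) (simp add: indicator_def)
      have i_g: "integrable ?M (\<lambda>x. \<bar>g x\<bar> * indicator (ball 0 (3*e)) x)"
        by (rule int_mult_bdd[OF integrable_abs[OF gint] meas_ind, where K=1]) (simp add: indicator_def)
      have i_f: "integrable ?M (\<lambda>x. \<bar>f x\<bar> powr p * indicator (ball 0 (3*e)) x)"
        by (rule int_mult_bdd[OF pint meas_ind, where K=1]) (simp add: indicator_def)
      have Hs: "(LINT x|?M. h x * indicator (ball 0 (3*e)) x) < \<delta>" using r0b r by blast
      have Gs: "(LINT x|?M. \<bar>g x\<bar> * indicator (ball 0 (3*e)) x) < \<delta>"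
      proof -
        have "(LINT x|?M. \<bar>g x\<bar> * indicator (ball 0 (3*e)) x) \<le> (LINT x|?M. h x * indicator (ball 0 (3*e)) x)"
          by (rule integral_mono[OF i_g i_h]) (simp add: h_def indicator_def)
        then show ?thesis using Hs by linarith
      qed
      have Is: "(LINT x|?M. \<bar>f x\<bar> powr p * indicator (ball 0 (3*e)) x) < \<delta>"
      proof -
        have "(LINT x|?M. \<bar>f x\<bar> powr p * indicator (ball 0 (3*e)) x) \<le> (LINT x|?M. h x * indicator (ball 0 (3*e)) x)"
          by (rule integral_mono[OF i_f i_h]) (simp add: h_def indicator_def)
        then show ?thesis using Hs by linarith
      qed
      define F where "F = (LINT x|?M. \<bar>f x\<bar> * indicator (ball 0 (3*e)) x)"
      define G where "G = (LINT x|?M. \<bar>g x\<bar> * indicator (ball 0 (3*e)) x)"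
      define I where "I = (LINT x|?M. \<bar>f x\<bar> powr p * indicator (ball 0 (3*e)) x)"
      have KB: "d \<le> (Cm * (1/e)^m) * F + C00 * G"
        unfolding d_def D_def F_def G_def
      proof (rule key_bound[OF hyp DA fint gint sphi Kc Ks Kz e0])
        show "\<forall>x. \<bar>partials L (\<lambda>x. \<phi> x * psi ((1/e) *\<^sub>R x)) x\<bar> \<le> Cm * (1/e)^m"
          using Cm e0 lenL by simp
        show "\<forall>x. \<bar>\<phi> x * psi ((1/e) *\<^sub>R x)\<bar> \<le> C00"
          using C00 e0 by simp
      qed
      have LT: "F \<le> t * (3*e)^m * ?V + t powr (1 - p) * (3*e)^m * I"
        unfolding F_def I_def by (rule lambda_trick[OF fint pint mn p_def t0 r(1,2)])
      have s3: "(1/e) * (3*e) = 3" using e0 by simp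
      have scale: "(1/e)^m * (3*e)^m = 3^m" by (simp only: power_mult_distrib[symmetric] s3)
      have "(Cm * (1/e)^m) * F \<le> (Cm * (1/e)^m) * (t * (3*e)^m * ?V + t powr (1 - p) * (3*e)^m * I)"
        using LT Cm0 e0 by (intro mult_left_mono) auto
      also have "\<dots> = Cm * ((1/e)^m * (3*e)^m) * (t * ?V + t powr (1 - p) * I)"
        by (simp add: algebra_simps)
      also have "\<dots> = A * t * ?V + A * t powr (1 - p) * I"
        unfolding scale A_def by (simp add: algebra_simps)
      finally have FB: "(Cm * (1/e)^m) * F \<le> A * t * ?V + A * t powr (1 - p) * I" .
      have "A * t powr (1 - p) * I \<le> A * t powr (1 - p) * \<delta>"
        using Is A0 unfolding I_def by (intro mult_left_mono) auto
      moreover have "C00 * G \<le> C00 * \<delta>" using Gs C000 unfolding G_def by (intro mult_left_mono) auto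
      moreover have "A * t powr (1 - p) * \<delta> + C00 * \<delta> < d / 4 * 2"
      proof -
        have "A * t powr (1 - p) * \<delta> + C00 * \<delta> = (A * t powr (1 - p) + C00) * \<delta>" by (simp add: algebra_simps)
        also have "\<dots> < Q * \<delta>" using \<delta>0 by (simp add: Q_def)
        also have "Q * \<delta> = d / 4" using Q0 by (simp add: \<delta>_def)
        finally show ?thesis using d by simp
      qed
      ultimately have "d < d / 4 + d / 4 * 2" using KB FB At by linarith
      then show False using d by simp
    qed
    then show "(LINT x|?M. f x * Dalpha \<alpha> \<phi> x) = (-1) ^ mi_order \<alpha> * (LINT x|?M. g x * \<phi> x)"
      by (simp add: D_def DA)
  qed
qed


end
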